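(* In the MDPUC setting of the context, assume Ergodicity, and let $\beta(z)=\mathbb E[\pi_e(A\mid S,U)/\pi_b(A\mid S,U)\mid Z=z]$. Then the stationary density ratio $d(S)$ is the unique function satisfying the moment condition $\mathbb E[d(S)]=1$ together with the conditional moment restriction $d(S')=\mathbb E_b[d(S)\beta(Z)\mid S']$ for all $S'$.
   Context: MDPUC: finite state space $\mathcal S$, actions $[m]$, confounder space $\mathcal U$, transitions $P_T(s'\mid s,a,u)$; at each time step an iid confounder $U_t$ is drawn, $A_t\sim\pi(\cdot\mid S_t,U_t)$, $S_{t+1}\sim P_T(\cdot\mid S_t,A_t,U_t)$. $S'$ is the successor state of $S$, $Z=(S,A,S')$, $X=(Z,U)$. Behavior policy $\pi_b(a\mid s,u)$, evaluation policy $\pi_e(a\mid s,u)$. Ergodicity: the chain of $X$ values under each of $\pi_b,\pi_e$ is ergodic, and under $\pi_b$ it is stationary. $\mathbb E_b$ (and unsubscripted $\mathbb E$) is expectation under the stationary distribution of $\pi_b$; $d(S)$ is the stationary density ratio of $S$: $\mathbb E_e[g(S)]=\mathbb E_b[d(S)g(S)]$ for all measurable $g$.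
   Formalization: Every action with $\pi_e(a\mid s,u)>0$ also has $\pi_b(a\mid s,u)>0$, and uniqueness of $d(S)$ is only up to its values on states of zero stationary probability under $\pi_b$. Apart from conventions, each condition added here is assumed in the paper as well or is needed for the statement above to hold. *)

theory Defs
  imports "HOL-Probability.Probability"
begin

text \<open>MDPUC with finite state type 's, actions {0..<m} (i.e. [m]), confounders of type 'u
  distributed iid according to the probability measure M.
  Policies: pol s u a = pi(a | s,u).  Transitions: PT s a u s' = P_T(s' | s,a,u).\<close>

definition is_policy :: "nat \<Rightarrow> 'u measure \<Rightarrow> ('s \<Rightarrow> 'u \<Rightarrow> nat \<Rightarrow> real) \<Rightarrow> bool" where
  "is_policy m M pol \<longleftrightarrow>
     (\<forall>s a. (\<lambda>u. pol s u a) \<in> borel_measurable M) \<and>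
     (\<forall>s. \<forall>u\<in>space M. (\<forall>a<m. 0 \<le> pol s u a) \<and> (\<Sum>a<m. pol s u a) = 1)"

definition is_transition :: "nat \<Rightarrow> 'u measure \<Rightarrow> ('s::finite \<Rightarrow> nat \<Rightarrow> 'u \<Rightarrow> 's \<Rightarrow> real) \<Rightarrow> bool" where
  "is_transition m M PT \<longleftrightarrow>
     (\<forall>s a s'. (\<lambda>u. PT s a u s') \<in> borel_measurable M) \<and>
     (\<forall>s. \<forall>a<m. \<forall>u\<in>space M. (\<forall>s'. 0 \<le> PT s a u s') \<and> (\<Sum>s'\<in>UNIV. PT s a u s') = 1)"

definition Kern :: "nat \<Rightarrow> 'u measure \<Rightarrow> ('s \<Rightarrow> 'u \<Rightarrow> nat \<Rightarrow> real)
    \<Rightarrow> ('s \<Rightarrow> nat \<Rightarrow> 'u \<Rightarrow> 's \<Rightarrow> real) \<Rightarrow> 's \<Rightarrow> 's \<Rightarrow> real" where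
  "Kern m M pol PT s s' = (\<integral>u. (\<Sum>a<m. pol s u a * PT s a u s') \<partial>M)"

fun nstep :: "('s::finite \<Rightarrow> 's \<Rightarrow> real) \<Rightarrow> nat \<Rightarrow> 's \<Rightarrow> 's \<Rightarrow> real" where
  "nstep K 0 s s' = (if s = s' then 1 else 0)"
| "nstep K (Suc n) s s' = (\<Sum>s''\<in>UNIV. nstep K n s s'' * K s'' s')"

definition stationary_dist :: "('s::finite \<Rightarrow> 's \<Rightarrow> real) \<Rightarrow> ('s \<Rightarrow> real) \<Rightarrow> bool" where
  "stationary_dist K \<rho> \<longleftrightarrow> (\<forall>s. 0 \<le> \<rho> s) \<and> (\<Sum>s\<in>UNIV. \<rho> s) = 1 \<and>
     (\<forall>s'. \<rho> s' = (\<Sum>s\<in>UNIV. \<rho> s * K s s'))"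

text \<open>Since X_t = (S_t,A_t,S_{t+1},U_t) depends on
  the past only through S_t, this is ergodicity of the X-chain.\<close>
definition ergodic_chain :: "('s::finite \<Rightarrow> 's \<Rightarrow> real) \<Rightarrow> bool" where
  "ergodic_chain K \<longleftrightarrow> (\<exists>\<rho>. stationary_dist K \<rho> \<and>
     (\<forall>s s'. (\<lambda>n. nstep K n s s') \<longlonglongrightarrow> \<rho> s'))"

text \<open>Expectation of h(Z,U) under the stationary law of X = (S,A,S',U) for behaviour policy pib,
  where rho is the stationary law of S.\<close>
definition Eb :: "nat \<Rightarrow> 'u measure \<Rightarrow> ('s::finite \<Rightarrow> real) \<Rightarrow> ('s \<Rightarrow> 'u \<Rightarrow> nat \<Rightarrow> real)
    \<Rightarrow> ('s \<Rightarrow> nat \<Rightarrow> 'u \<Rightarrow> 's \<Rightarrow> real) \<Rightarrow> ('s \<times> nat \<times> 's \<Rightarrow> 'u \<Rightarrow> real) \<Rightarrow> real" where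
  "Eb m M \<rho> pib PT h = (\<Sum>s\<in>UNIV. \<rho> s *
      (\<integral>u. (\<Sum>a<m. \<Sum>s'\<in>UNIV. pib s u a * PT s a u s' * h (s, a, s') u) \<partial>M))"

definition beta :: "nat \<Rightarrow> 'u measure \<Rightarrow> ('s::finite \<Rightarrow> real) \<Rightarrow> ('s \<Rightarrow> 'u \<Rightarrow> nat \<Rightarrow> real)
    \<Rightarrow> ('s \<Rightarrow> 'u \<Rightarrow> nat \<Rightarrow> real) \<Rightarrow> ('s \<Rightarrow> nat \<Rightarrow> 'u \<Rightarrow> 's \<Rightarrow> real) \<Rightarrow> 's \<times> nat \<times> 's \<Rightarrow> real" where
  "beta m M \<rho> pib pie PT z =
     Eb m M \<rho> pib PT (\<lambda>(s, a, s') u. (if (s, a, s') = z then 1 else 0) * (pie s u a / pib s u a))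
     / Eb m M \<rho> pib PT (\<lambda>z' u. if z' = z then 1 else 0)"

definition moment_conditions :: "nat \<Rightarrow> 'u measure \<Rightarrow> ('s::finite \<Rightarrow> real) \<Rightarrow> ('s \<Rightarrow> 'u \<Rightarrow> nat \<Rightarrow> real)
    \<Rightarrow> ('s \<Rightarrow> 'u \<Rightarrow> nat \<Rightarrow> real) \<Rightarrow> ('s \<Rightarrow> nat \<Rightarrow> 'u \<Rightarrow> 's \<Rightarrow> real) \<Rightarrow> ('s \<Rightarrow> real) \<Rightarrow> bool" where
  "moment_conditions m M \<rho> pib pie PT f \<longleftrightarrow>
     Eb m M \<rho> pib PT (\<lambda>(s, a, s') u. f s) = 1 \<and>
     (\<forall>t. Eb m M \<rho> pib PT (\<lambda>(s, a, s') u. if s' = t then 1 else 0) > 0 \<longrightarrow>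
        f t = Eb m M \<rho> pib PT (\<lambda>(s, a, s') u. f s * beta m M \<rho> pib pie PT (s, a, s') * (if s' = t then 1 else 0))
              / Eb m M \<rho> pib PT (\<lambda>(s, a, s') u. if s' = t then 1 else 0))"

end

theory Submission
  imports Defs
begin

lemma pol_le1:
  assumes "is_policy m M pol" "u \<in> space M" "a < m"
  shows "0 \<le> pol s u a" "pol s u a \<le> 1"
proof -
  have h: "\<forall>a<m. 0 \<le> pol s u a" "(\<Sum>a<m. pol s u a) = 1"
    using assms unfolding is_policy_def by auto
  then show "0 \<le> pol s u a" using assms by auto
  have "pol s u a \<le> (\<Sum>a<m. pol s u a)"
    by (rule member_le_sum) (use h assms in auto)
  then show "pol s u a \<le> 1" using h by simp
qed

lemma PT_le1:
  assumes "is_transition m M PT" "u \<in> space M" "a < m"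
  shows "0 \<le> PT s a u t" "PT s a u t \<le> 1"
proof -
  have h: "\<forall>t. 0 \<le> PT s a u t" "(\<Sum>t\<in>UNIV. PT s a u t) = 1"
    using assms unfolding is_transition_def by auto
  then show "0 \<le> PT s a u t" by auto
  have "PT s a u t \<le> (\<Sum>t\<in>UNIV. PT s a u t)"
    by (rule member_le_sum) (use h in auto)
  then show "PT s a u t \<le> 1" using h by simp
qed

lemma integ_prod:
  assumes "prob_space M" "is_policy m M pol" "is_transition m M PT" "a < m"
  shows "integrable M (\<lambda>u. pol s u a * PT s a u t)"
proof -
  interpret prob_space M by fact
  show ?thesis
  proof (rule integrable_const_bound[where B=1])
    show "AE u in M. norm (pol s u a * PT s a u t) \<le> 1"
    proof (rule AE_I2)
      fix u assume u: "u \<in> space M"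
      note p = pol_le1[OF assms(2) u assms(4), of s] PT_le1[OF assms(3) u assms(4), of s t]
      have "pol s u a * PT s a u t \<le> 1 * 1" using p by (intro mult_mono) auto
      moreover have "0 \<le> pol s u a * PT s a u t" using p by auto
      ultimately show "norm (pol s u a * PT s a u t) \<le> 1" by simp
    qed
    have "(\<lambda>u. pol s u a) \<in> borel_measurable M" "(\<lambda>u. PT s a u t) \<in> borel_measurable M"
      using assms unfolding is_policy_def is_transition_def by auto
    then show "(\<lambda>u. pol s u a * PT s a u t) \<in> borel_measurable M" by auto
  qed
qed

lemma nstep_inv:
  fixes K :: "'s::finite \<Rightarrow> 's \<Rightarrow> real"
  assumes "\<forall>t. g t = (\<Sum>s\<in>UNIV. g s * K s t)"
  shows "(\<Sum>s\<in>UNIV. g s * nstep K n s t) = g t"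
proof (induction n arbitrary: t)
  case 0
  then show ?case by (simp add: if_distrib cong: if_cong)
next
  case (Suc n)
  have "(\<Sum>s\<in>UNIV. g s * nstep K (Suc n) s t) = (\<Sum>s\<in>UNIV. \<Sum>s''\<in>UNIV. g s * nstep K n s s'' * K s'' t)"
    by (simp add: sum_distrib_left mult.assoc)
  also have "\<dots> = (\<Sum>s''\<in>UNIV. \<Sum>s\<in>UNIV. g s * nstep K n s s'' * K s'' t)"
    by (rule sum.swap)
  also have "\<dots> = (\<Sum>s''\<in>UNIV. g s'' * K s'' t)"
    by (simp only: sum_distrib_right[symmetric] Suc.IH)
  also have "\<dots> = g t" by (rule sym, rule assms[rule_format])
  finally show ?case .
qed

lemma erg_unique:
  fixes K :: "'s::finite \<Rightarrow> 's \<Rightarrow> real"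
  assumes "ergodic_chain K"
    and "(\<Sum>s\<in>UNIV. g s) = 1" "\<forall>t. g t = (\<Sum>s\<in>UNIV. g s * K s t)"
    and "(\<Sum>s\<in>UNIV. h s) = 1" "\<forall>t. h t = (\<Sum>s\<in>UNIV. h s * K s t)"
  shows "g = h"
proof -
  obtain \<rho> where lim: "\<forall>s s'. (\<lambda>n. nstep K n s s') \<longlonglongrightarrow> \<rho> s'"
    using assms(1) unfolding ergodic_chain_def by auto
  have key: "g t = \<rho> t" if "(\<Sum>s\<in>UNIV. g s) = 1" "\<forall>t. g t = (\<Sum>s\<in>UNIV. g s * K s t)" for g t
  proof -
    have "(\<lambda>n. \<Sum>s\<in>UNIV. g s * nstep K n s t) \<longlonglongrightarrow> (\<Sum>s\<in>UNIV. g s * \<rho> t)"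
      using lim by (intro tendsto_sum tendsto_mult_left) auto
    moreover have "(\<lambda>n. \<Sum>s\<in>UNIV. g s * nstep K n s t) = (\<lambda>n. g t)"
      using nstep_inv[OF that(2)] by auto
    ultimately have "(\<lambda>n. g t) \<longlonglongrightarrow> (\<Sum>s\<in>UNIV. g s * \<rho> t)" by simp
    then have "g t = (\<Sum>s\<in>UNIV. g s * \<rho> t)" by (rule LIMSEQ_unique[OF tendsto_const])
    also have "\<dots> = \<rho> t" using that(1) by (simp add: sum_distrib_right[symmetric])
    finally show ?thesis .
  qed
  have "g t = h t" for t using key[of g t, OF assms(2,3)] key[of h t, OF assms(4,5)] by simp
  then show ?thesis by (rule ext)
qed


lemma int_sum2:
  fixes F :: "nat \<Rightarrow> 's::finite \<Rightarrow> 'u \<Rightarrow> real"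
  assumes I: "\<And>a t. a < m \<Longrightarrow> integrable M (F a t)"
  shows "(\<integral>u. (\<Sum>a<m. \<Sum>t\<in>UNIV. F a t u) \<partial>M) = (\<Sum>a<m. \<Sum>t\<in>UNIV. \<integral>u. F a t u \<partial>M)"
proof -
  have "(\<integral>u. (\<Sum>a<m. \<Sum>t\<in>UNIV. F a t u) \<partial>M) = (\<Sum>a<m. \<integral>u. (\<Sum>t\<in>UNIV. F a t u) \<partial>M)"
  proof (rule Bochner_Integration.integral_sum)
    fix a assume "a \<in> {..<m}"
    then have "a < m" by simp
    show "integrable M (\<lambda>u. \<Sum>t\<in>UNIV. F a t u)"
      by (rule Bochner_Integration.integrable_sum) (rule I[OF \<open>a < m\<close>])
  qed
  also have "\<dots> = (\<Sum>a<m. \<Sum>t\<in>UNIV. \<integral>u. F a t u \<partial>M)"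
  proof (rule sum.cong[OF refl])
    fix a assume "a \<in> {..<m}"
    then have "a < m" by simp
    show "(\<integral>u. (\<Sum>t\<in>UNIV. F a t u) \<partial>M) = (\<Sum>t\<in>UNIV. \<integral>u. F a t u \<partial>M)"
      by (rule Bochner_Integration.integral_sum) (rule I[OF \<open>a < m\<close>])
  qed
  finally show ?thesis .
qed

lemma Eb_expand:
  assumes "is_policy m M pib" "is_transition m M PT"
    and I: "\<And>s a t. a < m \<Longrightarrow> integrable M (\<lambda>u. pib s u a * PT s a u t * h (s,a,t) u)"
  shows "Eb m M \<rho> pib PT h = (\<Sum>s\<in>UNIV. \<rho> s * (\<Sum>a<m. \<Sum>t\<in>UNIV.
            \<integral>u. pib s u a * PT s a u t * h (s,a,t) u \<partial>M))"
  unfolding Eb_def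
proof (rule sum.cong[OF refl])
  fix s
  show "\<rho> s * (\<integral>u. (\<Sum>a<m. \<Sum>t\<in>UNIV. pib s u a * PT s a u t * h (s,a,t) u) \<partial>M) =
     \<rho> s * (\<Sum>a<m. \<Sum>t\<in>UNIV. \<integral>u. pib s u a * PT s a u t * h (s,a,t) u \<partial>M)"
    using int_sum2[where F="\<lambda>a t u. pib s u a * PT s a u t * h (s,a,t) u", OF I] by simp
qed

lemma Eb_const:
  assumes "prob_space M" "is_policy m M pib" "is_transition m M PT"
    and H: "\<And>s a t u. h (s,a,t) u = c s a t"
  shows "Eb m M \<rho> pib PT h = (\<Sum>s\<in>UNIV. \<rho> s * (\<Sum>a<m. \<Sum>t\<in>UNIV.
            (\<integral>u. pib s u a * PT s a u t \<partial>M) * c s a t))"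
proof -
  have "Eb m M \<rho> pib PT h = (\<Sum>s\<in>UNIV. \<rho> s * (\<Sum>a<m. \<Sum>t\<in>UNIV.
            \<integral>u. pib s u a * PT s a u t * h (s,a,t) u \<partial>M))"
    using assms(2,3) by (rule Eb_expand) (simp add: H integ_prod[OF assms(1-3)])
  also have "\<dots> = (\<Sum>s\<in>UNIV. \<rho> s * (\<Sum>a<m. \<Sum>t\<in>UNIV.
            (\<integral>u. pib s u a * PT s a u t \<partial>M) * c s a t))"
    by (simp add: H)
  finally show ?thesis .
qed

lemma Eb_delta:
  assumes "prob_space M" "is_policy m M pib" "is_transition m M PT"
    and H: "\<And>s a t u. h (s,a,t) u = (if (s,a,t) = (s0,a0,t0) then Y s a t u else 0)"
    and a0: "a0 < m"
    and I: "\<And>s a t. a < m \<Longrightarrow> integrable M (\<lambda>u. pib s u a * PT s a u t * Y s a t u)"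
  shows "Eb m M \<rho> pib PT h = \<rho> s0 * (\<integral>u. pib s0 u a0 * PT s0 a0 u t0 * Y s0 a0 t0 u \<partial>M)"
proof -
  define J where "J s a t = (\<integral>u. pib s u a * PT s a u t * Y s a t u \<partial>M)" for s a t
  have "Eb m M \<rho> pib PT h = (\<Sum>s\<in>UNIV. \<rho> s * (\<Sum>a<m. \<Sum>t\<in>UNIV.
            \<integral>u. pib s u a * PT s a u t * h (s,a,t) u \<partial>M))"
    using assms(2,3)
  proof (rule Eb_expand)
    fix s a t assume "a < m"
    show "integrable M (\<lambda>u. pib s u a * PT s a u t * h (s, a, t) u)"
    proof (cases "(s,a,t) = (s0,a0,t0)")
      case True
      then show ?thesis using I[OF \<open>a < m\<close>] by (simp only: H) simp
    next
      case False
      then show ?thesis by (simp only: H) simp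
    qed
  qed
  also have "\<dots> = (\<Sum>s\<in>UNIV. \<rho> s * (\<Sum>a<m. \<Sum>t\<in>UNIV.
            (if (s,a,t) = (s0,a0,t0) then J s a t else 0)))"
  proof (intro sum.cong refl arg_cong[where f="\<lambda>x. _ * x"])
    fix s a t
    show "(\<integral>u. pib s u a * PT s a u t * h (s,a,t) u \<partial>M) = (if (s,a,t) = (s0,a0,t0) then J s a t else 0)"
      by (cases "(s,a,t) = (s0,a0,t0)") (simp_all only: H J_def, simp_all)
  qed
  also have "\<dots> = (\<Sum>s\<in>UNIV. \<rho> s * (\<Sum>a<m. (if s = s0 \<and> a = a0 then J s a t0 else 0)))"
  proof (intro sum.cong refl arg_cong[where f="\<lambda>x. _ * x"])
    fix s a
    show "(\<Sum>t\<in>UNIV. if (s,a,t) = (s0,a0,t0) then J s a t else 0) = (if s = s0 \<and> a = a0 then J s a t0 else 0)"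
      by (cases "s = s0 \<and> a = a0") auto
  qed
  also have "\<dots> = (\<Sum>s\<in>UNIV. \<rho> s * (if s = s0 then J s a0 t0 else 0))"
  proof (intro sum.cong refl arg_cong[where f="\<lambda>x. _ * x"])
    fix s
    show "(\<Sum>a<m. if s = s0 \<and> a = a0 then J s a t0 else 0) = (if s = s0 then J s a0 t0 else 0)"
      using a0 by (cases "s = s0") auto
  qed
  also have "\<dots> = (\<Sum>s\<in>UNIV. if s = s0 then \<rho> s * J s a0 t0 else 0)"
    by (intro sum.cong) auto
  also have "\<dots> = \<rho> s0 * J s0 a0 t0" by simp
  finally show ?thesis unfolding J_def .
qed


lemma term_eq:
  fixes \<rho> q r f :: real
  assumes "q = 0 \<Longrightarrow> r = 0"
  shows "\<rho> * (q * (f * (\<rho> * r / (\<rho> * q)))) = f * \<rho> * r"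
proof (cases "\<rho> * q = 0")
  case True
  then consider "\<rho> = 0" | "q = 0" by auto
  then show ?thesis
  proof cases
    case 1 then show ?thesis by simp
  next
    case 2 then show ?thesis using assms by simp
  qed
next
  case False
  have "\<rho> * (q * (f * (\<rho> * r / (\<rho> * q)))) = f * \<rho> * r * ((\<rho> * q) / (\<rho> * q))"
    by (simp only: times_divide_eq_right mult_ac)
  also have "\<dots> = f * \<rho> * r" using False by simp
  finally show ?thesis .
qed

theorem theorem4:
  fixes m :: nat and M :: "'u measure"
    and PT :: "'s::finite \<Rightarrow> nat \<Rightarrow> 'u \<Rightarrow> 's \<Rightarrow> real"
    and pib pie :: "'s \<Rightarrow> 'u \<Rightarrow> nat \<Rightarrow> real"
    and rhob rhoe d :: "'s \<Rightarrow> real"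
  assumes "prob_space M"
    and "is_policy m M pib" and "is_policy m M pie"
    and "is_transition m M PT"
    and overlap: "\<forall>s. \<forall>u\<in>space M. \<forall>a<m. 0 < pie s u a \<longrightarrow> 0 < pib s u a"
    and "ergodic_chain (Kern m M pib PT)" and "ergodic_chain (Kern m M pie PT)"
    and "stationary_dist (Kern m M pib PT) rhob"
    and "stationary_dist (Kern m M pie PT) rhoe"
    and dratio: "\<forall>g. (\<Sum>s\<in>UNIV. rhoe s * g s) = (\<Sum>s\<in>UNIV. rhob s * d s * g s)"
  shows "moment_conditions m M rhob pib pie PT d \<and>
         (\<forall>f. moment_conditions m M rhob pib pie PT f \<longrightarrow> (\<forall>s. 0 < rhob s \<longrightarrow> f s = d s))"
proof -
  note P = assms(1) and pb = assms(2) and pe = assms(3) and tr = assms(4)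
  define q where "q s a t = (\<integral>u. pib s u a * PT s a u t \<partial>M)" for s a t
  define r where "r s a t = (\<integral>u. pie s u a * PT s a u t \<partial>M)" for s a t
  have sb0: "(\<forall>s. 0 \<le> rhob s) \<and> (\<Sum>s\<in>UNIV. rhob s) = 1 \<and>
     (\<forall>t. rhob t = (\<Sum>s\<in>UNIV. rhob s * Kern m M pib PT s t))"
    using assms(8) unfolding stationary_dist_def .
  note sb = sb0[THEN conjunct1] sb0[THEN conjunct2, THEN conjunct1] sb0[THEN conjunct2, THEN conjunct2]
  have se0: "(\<forall>s. 0 \<le> rhoe s) \<and> (\<Sum>s\<in>UNIV. rhoe s) = 1 \<and>
     (\<forall>t. rhoe t = (\<Sum>s\<in>UNIV. rhoe s * Kern m M pie PT s t))"
    using assms(9) unfolding stationary_dist_def .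
  note se = se0[THEN conjunct2, THEN conjunct1] se0[THEN conjunct2, THEN conjunct2]
  have Kb: "Kern m M pib PT s t = (\<Sum>a<m. q s a t)" for s t
    unfolding Kern_def q_def by (rule Bochner_Integration.integral_sum) (rule integ_prod[OF P pb tr], simp)
  have Ke: "Kern m M pie PT s t = (\<Sum>a<m. r s a t)" for s t
    unfolding Kern_def r_def by (rule Bochner_Integration.integral_sum) (rule integ_prod[OF P pe tr], simp)
  have q_nn: "0 \<le> q s a t" if "a < m" for s a t
    unfolding q_def
    by (rule Bochner_Integration.integral_nonneg) (use pol_le1[OF pb _ that] PT_le1[OF tr _ that] in auto)
  have q_sum: "(\<Sum>a<m. \<Sum>t\<in>UNIV. q s a t) = 1" for s
  proof -
    have "(\<Sum>a<m. \<Sum>t\<in>UNIV. q s a t) = (\<integral>u. (\<Sum>a<m. \<Sum>t\<in>UNIV. pib s u a * PT s a u t) \<partial>M)"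
      unfolding q_def by (rule int_sum2[symmetric]) (rule integ_prod[OF P pb tr])
    also have "\<dots> = (\<integral>u. 1 \<partial>M)"
    proof (rule Bochner_Integration.integral_cong[OF refl])
      fix u assume u: "u \<in> space M"
      have "(\<Sum>a<m. \<Sum>t\<in>UNIV. pib s u a * PT s a u t) = (\<Sum>a<m. pib s u a * (\<Sum>t\<in>UNIV. PT s a u t))"
        by (simp add: sum_distrib_left)
      also have "\<dots> = (\<Sum>a<m. pib s u a)"
        using tr u unfolding is_transition_def by (intro sum.cong) auto
      also have "\<dots> = 1" using pb u unfolding is_policy_def by auto
      finally show "(\<Sum>a<m. \<Sum>t\<in>UNIV. pib s u a * PT s a u t) = 1" .
    qed
    also have "\<dots> = 1" by (simp add: prob_space.prob_space[OF P])
    finally show ?thesis .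
  qed
  have qr: "r s a t = 0" if "a < m" "q s a t = 0" for s a t
  proof -
    have "AE u in M. pib s u a * PT s a u t = 0"
      using that(2) unfolding q_def
      by (subst (asm) integral_nonneg_eq_0_iff_AE)
         (auto intro!: AE_I2 integ_prod[OF P pb tr that(1)] simp: pol_le1[OF pb _ that(1)] PT_le1[OF tr _ that(1)])
    then have "AE u in M. pie s u a * PT s a u t = 0"
    proof (rule AE_mp[OF _ AE_I2], intro impI)
      fix u assume u: "u \<in> space M" and z: "pib s u a * PT s a u t = 0"
      have "0 \<le> pie s u a" using pol_le1[OF pe u that(1)] by auto
      moreover have "pib s u a = 0 \<Longrightarrow> \<not> 0 < pie s u a" using overlap u that(1) by force
      ultimately show "pie s u a * PT s a u t = 0" using z by auto
    qed
    then show ?thesis unfolding r_def by (rule integral_eq_zero_AE)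
  qed
  have ratio_eq: "pib s u a * PT s a u t * (pie s u a / pib s u a) = pie s u a * PT s a u t"
    if "a < m" "u \<in> space M" for s a t u
  proof (cases "pib s u a = 0")
    case True
    have "0 \<le> pie s u a" using pol_le1[OF pe that(2) that(1)] by auto
    moreover have "\<not> 0 < pie s u a" using overlap that True by force
    ultimately show ?thesis using True by simp
  next
    case False
    then show ?thesis by simp
  qed
  have ratio_int: "integrable M (\<lambda>u. pib s u a * PT s a u t * (pie s u a / pib s u a))" if "a < m" for s a t
    using integ_prod[OF P pe tr that, of s t] by (subst Bochner_Integration.integrable_cong[OF refl ratio_eq[OF that]]) auto
  have E1: "Eb m M rhob pib PT (\<lambda>(s, a, s') u. f s) = (\<Sum>s\<in>UNIV. rhob s * f s)" for f
  proof -
    have "Eb m M rhob pib PT (\<lambda>(s, a, s') u. f s) = (\<Sum>s\<in>UNIV. rhob s * (\<Sum>a<m. \<Sum>t\<in>UNIV. q s a t * f s))"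
      unfolding q_def by (rule Eb_const[OF P pb tr]) simp
    also have "\<dots> = (\<Sum>s\<in>UNIV. rhob s * f s)"
      by (simp add: sum_distrib_right[symmetric] q_sum)
    finally show ?thesis .
  qed
  have E2: "Eb m M rhob pib PT (\<lambda>(s, a, s') u. if s' = t then 1 else 0) = rhob t" for t
  proof -
    have "Eb m M rhob pib PT (\<lambda>(s, a, s') u. if s' = t then 1 else 0) =
       (\<Sum>s\<in>UNIV. rhob s * (\<Sum>a<m. \<Sum>t'\<in>UNIV. q s a t' * (if t' = t then 1 else 0)))"
      unfolding q_def by (rule Eb_const[OF P pb tr]) simp
    also have "\<dots> = (\<Sum>s\<in>UNIV. rhob s * Kern m M pib PT s t)"
      by (simp add: Kb if_distrib cong: if_cong)
    also have "\<dots> = rhob t" by (rule sym, rule sb(3)[rule_format])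
    finally show ?thesis .
  qed
  have beta_eq: "beta m M rhob pib pie PT (s, a, t) = rhob s * r s a t / (rhob s * q s a t)"
    if "a < m" for s a t
  proof -
    have num: "Eb m M rhob pib PT (\<lambda>(s', a', t') u. (if (s', a', t') = (s, a, t) then 1 else 0) * (pie s' u a' / pib s' u a'))
       = rhob s * r s a t"
    proof -
      have "Eb m M rhob pib PT (\<lambda>(s', a', t') u. (if (s', a', t') = (s, a, t) then 1 else 0) * (pie s' u a' / pib s' u a'))
         = rhob s * (\<integral>u. pib s u a * PT s a u t * (pie s u a / pib s u a) \<partial>M)"
        by (rule Eb_delta[OF P pb tr _ that, where Y="\<lambda>s a t u. pie s u a / pib s u a"]) (simp, rule ratio_int)
      also have "\<dots> = rhob s * r s a t"
        unfolding r_def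
        by (intro arg_cong[where f="\<lambda>x. rhob s * x"] Bochner_Integration.integral_cong refl) (rule ratio_eq[OF that])
      finally show ?thesis .
    qed
    have den: "Eb m M rhob pib PT (\<lambda>z' u. if z' = (s, a, t) then 1 else 0) = rhob s * q s a t"
      unfolding q_def
      by (subst Eb_delta[OF P pb tr _ that, where Y="\<lambda>s a t u. 1"])
         (auto simp: integ_prod[OF P pb tr])
    show ?thesis unfolding beta_def num den ..
  qed
  have E5: "Eb m M rhob pib PT (\<lambda>(s, a, s') u. f s * beta m M rhob pib pie PT (s, a, s') * (if s' = t then 1 else 0))
      = (\<Sum>s\<in>UNIV. f s * rhob s * Kern m M pie PT s t)" for f t
  proof -
    have "Eb m M rhob pib PT (\<lambda>(s, a, s') u. f s * beta m M rhob pib pie PT (s, a, s') * (if s' = t then 1 else 0))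
      = (\<Sum>s\<in>UNIV. rhob s * (\<Sum>a<m. \<Sum>t'\<in>UNIV. q s a t' * (f s * beta m M rhob pib pie PT (s, a, t') * (if t' = t then 1 else 0))))"
      unfolding q_def by (rule Eb_const[OF P pb tr]) simp
    also have "\<dots> = (\<Sum>s\<in>UNIV. rhob s * (\<Sum>a<m. q s a t * (f s * beta m M rhob pib pie PT (s, a, t))))"
      by (simp add: if_distrib cong: if_cong)
    also have "\<dots> = (\<Sum>s\<in>UNIV. \<Sum>a<m. rhob s * (q s a t * (f s * (rhob s * r s a t / (rhob s * q s a t)))))"
      by (simp add: sum_distrib_left beta_eq)
    also have "\<dots> = (\<Sum>s\<in>UNIV. \<Sum>a<m. f s * rhob s * r s a t)"
      by (intro sum.cong refl term_eq) (use qr in auto)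
    also have "\<dots> = (\<Sum>s\<in>UNIV. f s * rhob s * Kern m M pie PT s t)"
      by (simp add: Ke sum_distrib_left)
    finally show ?thesis .
  qed
  have rhoe_d: "rhoe s = rhob s * d s" for s
    using spec[OF dratio, of "\<lambda>s'. if s' = s then 1 else 0"] by (simp add: if_distrib cong: if_cong)
  have part1: "moment_conditions m M rhob pib pie PT d"
    unfolding moment_conditions_def E1 E2 E5
  proof (intro conjI allI impI)
    show "(\<Sum>s\<in>UNIV. rhob s * d s) = 1" using se(1) rhoe_d by simp
    fix t assume t: "0 < rhob t"
    have "(\<Sum>s\<in>UNIV. d s * rhob s * Kern m M pie PT s t) = (\<Sum>s\<in>UNIV. rhoe s * Kern m M pie PT s t)"
      by (simp add: rhoe_d mult_ac)
    also have "\<dots> = rhoe t" by (rule sym, rule se(2)[rule_format])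
    also have "\<dots> = rhob t * d t" by (rule rhoe_d)
    finally show "d t = (\<Sum>s\<in>UNIV. d s * rhob s * Kern m M pie PT s t) / rhob t"
      using t by simp
  qed
  have part2: "f s = d s" if mc: "moment_conditions m M rhob pib pie PT f" and s: "0 < rhob s" for f s
  proof -
    define g where "g s = rhob s * f s" for s
    have g1: "(\<Sum>s\<in>UNIV. g s) = 1" using mc unfolding moment_conditions_def E1 g_def by (rule conjunct1)
    have mc2: "\<forall>t. 0 < rhob t \<longrightarrow> f t = (\<Sum>s\<in>UNIV. f s * rhob s * Kern m M pie PT s t) / rhob t"
      using mc unfolding moment_conditions_def E2 E5 by (rule conjunct2)
    have gst: "\<forall>t. g t = (\<Sum>s\<in>UNIV. g s * Kern m M pie PT s t)"
    proof
      fix t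
      show "g t = (\<Sum>s\<in>UNIV. g s * Kern m M pie PT s t)"
      proof (cases "0 < rhob t")
        case True
        then have "f t = (\<Sum>s\<in>UNIV. f s * rhob s * Kern m M pie PT s t) / rhob t"
          using mc2 True by blast
        have "rhob t * f t = rhob t * ((\<Sum>s\<in>UNIV. f s * rhob s * Kern m M pie PT s t) / rhob t)"
          using \<open>f t = _\<close> by simp
        also have "\<dots> = (\<Sum>s\<in>UNIV. f s * rhob s * Kern m M pie PT s t)" using True by simp
        also have "\<dots> = (\<Sum>s\<in>UNIV. g s * Kern m M pie PT s t)" unfolding g_def by (simp add: mult_ac)
        finally show ?thesis unfolding g_def .
      next
        case False
        have "0 \<le> rhob t" using sb(1) by blast
        then have t0: "rhob t = 0" using False by linarith
        have z: "g s' * Kern m M pie PT s' t = 0" for s'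
        proof (cases "rhob s' = 0")
          case True
          then show ?thesis unfolding g_def by simp
        next
          case False
          have Kb_nn: "0 \<le> Kern m M pib PT x t" for x
            unfolding Kb by (rule sum_nonneg) (simp add: q_nn)
          have "(\<Sum>x\<in>UNIV. rhob x * Kern m M pib PT x t) = rhob t" by (rule sym, rule sb(3)[rule_format])
          then have "(\<Sum>x\<in>UNIV. rhob x * Kern m M pib PT x t) = 0" using t0 by simp
          then have "\<forall>x\<in>UNIV. rhob x * Kern m M pib PT x t = 0"
            by (subst (asm) sum_nonneg_eq_0_iff) (auto simp: sb(1) Kb_nn)
          then have "Kern m M pib PT s' t = 0" using False by auto
          then have "\<forall>a\<in>{..<m}. q s' a t = 0"
            unfolding Kb by (subst (asm) sum_nonneg_eq_0_iff) (auto simp: q_nn)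
          then have "Kern m M pie PT s' t = 0" unfolding Ke using qr by auto
          then show ?thesis by simp
        qed
        have "(\<Sum>s\<in>UNIV. g s * Kern m M pie PT s t) = 0"
          by (rule sum.neutral) (intro ballI z)
        moreover have "g t = 0" unfolding g_def using t0 by simp
        ultimately show ?thesis by simp
      qed
    qed
    have "g = rhoe"
      by (rule erg_unique[OF assms(7) g1 gst se])
    then have "g s = rhoe s" by simp
    then have "rhob s * f s = rhob s * d s" by (simp add: g_def rhoe_d)
    then show ?thesis using s by simp
  qed
  show ?thesis using part1 part2 by blast
qed

end
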